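(* Let $s = s[1..n]$ be a string over a finite alphabet. The LZ77 parse of $s$ (as defined in the context) can be computed by a deterministic algorithm that has read-only random access to $s$, writes its output to a write-only output, and uses $O(\log n)$ bits of workspace.
   Context: The LZ77 parse considered here is the greedy, non-self-referencing variant. It partitions $s$ into consecutive phrases, left to right. The first phrase is the single character $s[1]$. Let $t$ be the position just after the already-parsed prefix $s[1..t-1]$, with $t \le n$. For each $1 \le i < t$, let $L_i$ be the length of the longest common prefix of $s[i..t-1]$ and $s[t..n]$; let $L = \max_i L_i$, and let $i^*$ be the minimal $i$ attaining $L$. If $L \le 1$, the next phrase is the single character $s[t]$, output as that character. Otherwise the next phrase is $s[t..t+L-1]$, output as the pair $(i^*, L)$. Each phrase is thus either a single character or a copy of a substring of the prefix already parsed. *)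

theory Defs
  imports Main
begin

text \<open>Positions are 1-indexed as in the paper: s[k] is s ! (k - 1).\<close>

datatype 'a phrase = Lit 'a | Copy nat nat  \<comment> \<open>Copy i L = the pair (i, L)\<close>

fun lcp :: "'a list \<Rightarrow> 'a list \<Rightarrow> nat" where
  "lcp (x # xs) (y # ys) = (if x = y then Suc (lcp xs ys) else 0)"
| "lcp _ _ = 0"

text \<open>L_i: longest common prefix of s[i..t-1] and s[t..n].\<close>
definition Lval :: "'a list \<Rightarrow> nat \<Rightarrow> nat \<Rightarrow> nat" where
  "Lval s t i = lcp (take (t - i) (drop (i - 1) s)) (drop (t - 1) s)"

definition maxL :: "'a list \<Rightarrow> nat \<Rightarrow> nat" where
  "maxL s t = Max (Lval s t ` {1..<t})"

definition argL :: "'a list \<Rightarrow> nat \<Rightarrow> nat" where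
  "argL s t = (LEAST i. 1 \<le> i \<and> i < t \<and> Lval s t i = maxL s t)"

function lz_from :: "'a list \<Rightarrow> nat \<Rightarrow> 'a phrase list" where
  "lz_from s t =
     (if t = 0 \<or> length s < t then []
      else if t = 1 then Lit (s ! 0) # lz_from s 2
      else if maxL s t \<le> 1 then Lit (s ! (t - 1)) # lz_from s (Suc t)
      else Copy (argL s t) (maxL s t) # lz_from s (t + maxL s t))"
  by pat_completeness auto
termination
  by (relation "measure (\<lambda>(s, t). Suc (length s) - t)") auto

definition lz77 :: "'a list \<Rightarrow> 'a phrase list" where
  "lz77 s = lz_from s 1"

text \<open>Natural-number registers R (the workspace),
  a constant number of symbol registers C (each holding one alphabet symbol, or none),
  read-only random access to the input s (1-indexed), and a write-only output stream
  of phrases (the machine can append to it but never read it).\<close>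

datatype instr =
    Inc nat
  | Dec nat                 \<comment> \<open>R r := R r - 1 (truncated)\<close>
  | Assign nat nat
  | Add nat nat nat
  | Sub nat nat nat         \<comment> \<open>R d := R a - R b (truncated)\<close>
  | Jz nat nat
  | Jlt nat nat nat
  | Jmp nat
  | Load nat nat
  | JeqC nat nat nat
  | OutLit nat
  | OutCopy nat nat

record 'a config =
  pc :: nat
  regs :: "nat \<Rightarrow> nat"
  cregs :: "nat \<Rightarrow> 'a option"
  out :: "'a phrase list"

definition init :: "'a list \<Rightarrow> 'a config" where
  "init s = \<lparr>pc = 0, regs = (\<lambda>_. 0)(0 := length s), cregs = (\<lambda>_. None), out = []\<rparr>"

fun exec :: "instr \<Rightarrow> 'a list \<Rightarrow> 'a config \<Rightarrow> 'a config" where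
  "exec (Inc r) s c = c\<lparr>pc := Suc (pc c), regs := (regs c)(r := Suc (regs c r))\<rparr>"
| "exec (Dec r) s c = c\<lparr>pc := Suc (pc c), regs := (regs c)(r := regs c r - 1)\<rparr>"
| "exec (Assign d a) s c = c\<lparr>pc := Suc (pc c), regs := (regs c)(d := regs c a)\<rparr>"
| "exec (Add d a b) s c = c\<lparr>pc := Suc (pc c), regs := (regs c)(d := regs c a + regs c b)\<rparr>"
| "exec (Sub d a b) s c = c\<lparr>pc := Suc (pc c), regs := (regs c)(d := regs c a - regs c b)\<rparr>"
| "exec (Jz r t) s c = c\<lparr>pc := (if regs c r = 0 then t else Suc (pc c))\<rparr>"
| "exec (Jlt a b t) s c = c\<lparr>pc := (if regs c a < regs c b then t else Suc (pc c))\<rparr>"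
| "exec (Jmp t) s c = c\<lparr>pc := t\<rparr>"
| "exec (Load k r) s c = c\<lparr>pc := Suc (pc c),
     cregs := (cregs c)(k := (if 1 \<le> regs c r \<and> regs c r \<le> length s
                              then Some (s ! (regs c r - 1)) else None))\<rparr>"
| "exec (JeqC k1 k2 t) s c = c\<lparr>pc := (if cregs c k1 = cregs c k2 then t else Suc (pc c))\<rparr>"
| "exec (OutLit k) s c = c\<lparr>pc := Suc (pc c), out := out c @ [Lit (the (cregs c k))]\<rparr>"
| "exec (OutCopy a b) s c = c\<lparr>pc := Suc (pc c), out := out c @ [Copy (regs c a) (regs c b)]\<rparr>"

definition halted :: "instr list \<Rightarrow> 'a config \<Rightarrow> bool" where
  "halted P c \<longleftrightarrow> length P \<le> pc c"

definition step :: "instr list \<Rightarrow> 'a list \<Rightarrow> 'a config \<Rightarrow> 'a config" where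
  "step P s c = (if halted P c then c else exec (P ! pc c) s c)"

definition run :: "instr list \<Rightarrow> 'a list \<Rightarrow> nat \<Rightarrow> 'a config" where
  "run P s k = (step P s ^^ k) (init s)"

fun nregs_i :: "instr \<Rightarrow> nat" where
  "nregs_i (Inc r) = Suc r"
| "nregs_i (Dec r) = Suc r"
| "nregs_i (Assign d a) = Suc (max d a)"
| "nregs_i (Add d a b) = Suc (max d (max a b))"
| "nregs_i (Sub d a b) = Suc (max d (max a b))"
| "nregs_i (Jz r t) = Suc r"
| "nregs_i (Jlt a b t) = Suc (max a b)"
| "nregs_i (Jmp t) = 0"
| "nregs_i (Load k r) = Suc r"
| "nregs_i (JeqC k1 k2 t) = 0"
| "nregs_i (OutLit k) = 0"
| "nregs_i (OutCopy a b) = Suc (max a b)"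

fun ncregs_i :: "instr \<Rightarrow> nat" where
  "ncregs_i (Load k r) = Suc k"
| "ncregs_i (JeqC k1 k2 t) = Suc (max k1 k2)"
| "ncregs_i (OutLit k) = Suc k"
| "ncregs_i _ = 0"

definition nregs :: "instr list \<Rightarrow> nat" where
  "nregs P = Max (insert 1 (nregs_i ` set P))"

definition ncregs :: "instr list \<Rightarrow> nat" where
  "ncregs P = Max (insert 0 (ncregs_i ` set P))"

fun bitlen :: "nat \<Rightarrow> nat" where
  "bitlen v = (if v < 2 then 1 else Suc (bitlen (v div 2)))"

definition space :: "instr list \<Rightarrow> ('a::finite) config \<Rightarrow> nat" where
  "space P c = bitlen (length P) + (\<Sum>r<nregs P. bitlen (regs c r))
              + ncregs P * bitlen (card (UNIV :: 'a set))"

end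

theory Submission
  imports Defs
begin
declare bitlen.simps[simp del] lz_from.simps[simp del]

definition Prog :: "instr list" where
"Prog = [Inc 1, Inc 9, Jlt 0 1 38, Jlt 9 1 8, Load 0 1, OutLit 0, Inc 1, Jmp 2,
  Assign 4 10, Assign 5 10, Assign 2 9, Jlt 2 1 20, Jlt 9 4 17, Load 0 1, OutLit 0, Inc 1, Jmp 2,
  OutCopy 5 4, Add 1 1 4, Jmp 2,
  Assign 3 10, Add 6 2 3, Jlt 6 1 24, Jmp 32, Add 7 1 3, Jlt 0 7 32, Load 0 6, Load 1 7, JeqC 0 1 30, Jmp 32, Inc 3, Jmp 21,
  Jlt 4 3 35, Inc 2, Jmp 11, Assign 4 3, Assign 5 2, Jmp 33]"

lemma len_Prog: "length Prog = 38" by (simp add: Prog_def)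

definition goodR :: "'a list \<Rightarrow> (nat \<Rightarrow> nat) \<Rightarrow> bool" where
  "goodR s R \<longleftrightarrow> (\<forall>r<11. R r \<le> length s + 1)"

lemma goodR_upd[simp]: "goodR s R \<Longrightarrow> v \<le> length s + 1 \<Longrightarrow> goodR s (R(r := v))"
  unfolding goodR_def by auto

definition exe :: "'a list \<Rightarrow> 'a config \<Rightarrow> 'a config \<Rightarrow> bool" where
  "exe s c c' \<longleftrightarrow> (\<exists>k. (step Prog s ^^ k) c = c' \<and> (\<forall>j\<le>k. goodR s (regs ((step Prog s ^^ j) c))))"

definition wp :: "'a list \<Rightarrow> 'a config \<Rightarrow> ('a config \<Rightarrow> bool) \<Rightarrow> bool" where
  "wp s c Q \<longleftrightarrow> (\<exists>c'. exe s c c' \<and> Q c')"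

lemma wp_done: "goodR s (regs c) \<Longrightarrow> Q c \<Longrightarrow> wp s c Q"
  unfolding wp_def exe_def by (rule exI[of _ c]) (auto intro!: exI[of _ 0])

lemma wp_step: "goodR s (regs c) \<Longrightarrow> pc c < 38 \<Longrightarrow> wp s (exec (Prog ! pc c) s c) Q \<Longrightarrow> wp s c Q"
proof -
  assume g: "goodR s (regs c)" and p: "pc c < 38" and w: "wp s (exec (Prog ! pc c) s c) Q"
  have st: "step Prog s c = exec (Prog ! pc c) s c" using p by (simp add: step_def halted_def len_Prog)
  from w obtain c' k where k: "(step Prog s ^^ k) (step Prog s c) = c'"
    "\<forall>j\<le>k. goodR s (regs ((step Prog s ^^ j) (step Prog s c)))" "Q c'"
    unfolding wp_def exe_def st by blast
  have "(step Prog s ^^ Suc k) c = c'" using k(1) by (simp only: funpow_Suc_right comp_def)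
  moreover have "\<forall>j\<le>Suc k. goodR s (regs ((step Prog s ^^ j) c))"
  proof (intro allI impI)
    fix j assume "j \<le> Suc k"
    then show "goodR s (regs ((step Prog s ^^ j) c))"
      using g k(2) by (cases j) (auto simp only: funpow_Suc_right comp_def funpow_0 Suc_le_mono)
  qed
  ultimately show ?thesis using k(3) unfolding wp_def exe_def by blast
qed

lemma wp_trans: "wp s c Q1 \<Longrightarrow> (\<And>c'. Q1 c' \<Longrightarrow> goodR s (regs c') \<Longrightarrow> wp s c' Q) \<Longrightarrow> wp s c Q"
proof -
  assume w1: "wp s c Q1" and h: "\<And>c'. Q1 c' \<Longrightarrow> goodR s (regs c') \<Longrightarrow> wp s c' Q"
  from w1 obtain c1 k1 where k1: "(step Prog s ^^ k1) c = c1"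
    "\<forall>j\<le>k1. goodR s (regs ((step Prog s ^^ j) c))" "Q1 c1"
    unfolding wp_def exe_def by blast
  have "goodR s (regs c1)" using k1 by auto
  with h k1(3) obtain c2 k2 where k2: "(step Prog s ^^ k2) c1 = c2"
    "\<forall>j\<le>k2. goodR s (regs ((step Prog s ^^ j) c1))" "Q c2"
    unfolding wp_def exe_def by blast
  have "(step Prog s ^^ (k2 + k1)) c = c2" using k1(1) k2(1) by (simp add: funpow_add)
  moreover have "\<forall>j\<le>k2 + k1. goodR s (regs ((step Prog s ^^ j) c))"
  proof (intro allI impI)
    fix j assume j: "j \<le> k2 + k1"
    show "goodR s (regs ((step Prog s ^^ j) c))"
    proof (cases "j \<le> k1")
      case True then show ?thesis using k1(2) by auto
    next
      case False
      have jj: "j = (j - k1) + k1" "j - k1 \<le> k2" using j False by auto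
      have "(step Prog s ^^ j) c = (step Prog s ^^ (j - k1)) c1"
        using k1(1) by (metis jj(1) funpow_add comp_apply)
      then show ?thesis using k2(2) jj(2) by auto
    qed
  qed
  ultimately show ?thesis using k2(3) unfolding wp_def exe_def by blast
qed

lemma wp_mono: "wp s c Q1 \<Longrightarrow> (\<And>c'. Q1 c' \<Longrightarrow> Q c') \<Longrightarrow> wp s c Q"
  unfolding wp_def by blast

lemma Prog_nth: "Prog ! 0 = Inc 1" "Prog ! 1 = Inc 9" "Prog ! 2 = Jlt 0 1 38" "Prog ! 3 = Jlt 9 1 8"
  "Prog ! 4 = Load 0 1" "Prog ! 5 = OutLit 0" "Prog ! 6 = Inc 1" "Prog ! 7 = Jmp 2"
  "Prog ! 8 = Assign 4 10" "Prog ! 9 = Assign 5 10" "Prog ! 10 = Assign 2 9" "Prog ! 11 = Jlt 2 1 20"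
  "Prog ! 12 = Jlt 9 4 17" "Prog ! 13 = Load 0 1" "Prog ! 14 = OutLit 0" "Prog ! 15 = Inc 1" "Prog ! 16 = Jmp 2"
  "Prog ! 17 = OutCopy 5 4" "Prog ! 18 = Add 1 1 4" "Prog ! 19 = Jmp 2"
  "Prog ! 20 = Assign 3 10" "Prog ! 21 = Add 6 2 3" "Prog ! 22 = Jlt 6 1 24" "Prog ! 23 = Jmp 32"
  "Prog ! 24 = Add 7 1 3" "Prog ! 25 = Jlt 0 7 32" "Prog ! 26 = Load 0 6" "Prog ! 27 = Load 1 7"
  "Prog ! 28 = JeqC 0 1 30" "Prog ! 29 = Jmp 32" "Prog ! 30 = Inc 3" "Prog ! 31 = Jmp 21"
  "Prog ! 32 = Jlt 4 3 35" "Prog ! 33 = Inc 2" "Prog ! 34 = Jmp 11" "Prog ! 35 = Assign 4 3"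
  "Prog ! 36 = Assign 5 2" "Prog ! 37 = Jmp 33"
  by (simp_all add: Prog_def)

lemma lcp_le1: "lcp xs ys \<le> length xs"
  by (induction xs ys rule: lcp.induct) auto
lemma lcp_le2: "lcp xs ys \<le> length ys"
  by (induction xs ys rule: lcp.induct) auto
lemma lcp_less: "l \<le> lcp xs ys \<Longrightarrow> l < length xs \<Longrightarrow> l < length ys \<Longrightarrow> (l < lcp xs ys \<longleftrightarrow> xs ! l = ys ! l)"
proof (induction xs ys arbitrary: l rule: lcp.induct)
  case (1 x xs y ys)
  then show ?case by (cases l) (auto split: if_splits)
qed auto

lemma Lval_le1: "Lval s t i \<le> t - i"
  unfolding Lval_def using lcp_le1 by (metis length_take min.bounded_iff nle_le)
lemma Lval_le2: "Lval s t i \<le> length s + 1 - t"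
proof -
  have "Lval s t i \<le> length (drop (t - 1) s)" unfolding Lval_def by (rule lcp_le2)
  then show ?thesis by simp
qed

lemma Lval_less: "l \<le> Lval s t i \<Longrightarrow> 1 \<le> i \<Longrightarrow> i + l < t \<Longrightarrow> t + l \<le> length s \<Longrightarrow>
   (l < Lval s t i \<longleftrightarrow> s ! (i + l - 1) = s ! (t + l - 1))"
  unfolding Lval_def
  by (subst lcp_less) (auto simp: nth_take nth_drop algebra_simps)

lemma while_loop:
  fixes s :: "'a list"
  assumes "d = Lval s t i - l" "pc c = 21" "regs c 0 = length s" "regs c 1 = t" "regs c 2 = i" "regs c 3 = l"
    "goodR s (regs c)" "1 \<le> i" "i < t" "t \<le> length s" "l \<le> Lval s t i"
  shows "wp s c (\<lambda>c'. pc c' = 32 \<and> regs c' 3 = Lval s t i \<and>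
     (\<forall>r. r \<noteq> 3 \<and> r \<noteq> 6 \<and> r \<noteq> 7 \<longrightarrow> regs c' r = regs c r) \<and> out c' = out c)"
  using assms
proof (induction d arbitrary: c l rule: less_induct)
  case (less d)
  note A = less.prems
  have A1: "regs c (Suc 0) = t" using A by simp
  have F1: "Lval s t i \<le> t - i" by (rule Lval_le1)
  have F2: "Lval s t i \<le> length s + 1 - t" by (rule Lval_le2)
  have A2: "Suc 0 \<le> i" "Suc 0 \<le> i + l" "Suc 0 \<le> t + l" using A by auto
  note B = A A1 A2 F1 F2
  show ?case
    apply (rule wp_step, simp add: A, simp add: A)
    apply (simp add: A Prog_nth)
    apply (rule wp_step, use B in simp, simp)
    apply (cases "i + l < t")
    subgoal
      apply (simp add: B Prog_nth)
      apply (rule wp_step, use B in simp, simp)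
      apply (simp add: B Prog_nth)
      apply (rule wp_step, use B in simp, simp)
      apply (cases "length s < t + l")
      subgoal
        apply (simp add: B Prog_nth)
        apply (rule wp_done, use B in simp)
        using B by auto
      apply (simp add: B Prog_nth)
      apply (rule wp_step, use B in simp, simp)
      apply (simp add: B Prog_nth)
      apply (rule wp_step, use B in simp, simp)
      apply (simp add: B Prog_nth)
      apply (rule wp_step, use B in simp, simp)
      apply (cases "s ! (i + l - Suc 0) = s ! (t + l - Suc 0)")
      subgoal premises p
      proof -
        have lt: "l < Lval s t i" using Lval_less[of l s t i] p B by simp
        show ?thesis
          apply (simp add: B Prog_nth p)
          apply (rule wp_step, use B lt in simp, simp)
          apply (simp add: B Prog_nth)
          apply (rule wp_step, use B lt in simp, simp)
          apply (simp add: B Prog_nth)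
          apply (rule wp_mono, rule less.IH[of "Lval s t i - Suc l" "Suc l"])
          apply (simp_all add: B lt p)
          using B lt p by (auto simp: goodR_def)
      qed
      subgoal premises p
      proof -
        have eq: "l = Lval s t i" using Lval_less[of l s t i] p B by simp
        show ?thesis
          apply (simp add: B Prog_nth p)
          apply (rule wp_step, use B in simp, simp)
          apply (simp add: B Prog_nth)
          apply (rule wp_done, use B in simp)
          using B eq by auto
      qed
      done
    subgoal
      apply (simp add: B Prog_nth)
      apply (rule wp_step, use B in simp, simp)
      apply (simp add: B Prog_nth)
      apply (rule wp_done, use B in simp)
      using B by auto
    done
qed

definition bestUpTo :: "'a list \<Rightarrow> nat \<Rightarrow> nat \<Rightarrow> nat" where
  "bestUpTo s t i = Max (insert 0 (Lval s t ` {1..<i}))"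
definition bi_inv :: "'a list \<Rightarrow> nat \<Rightarrow> nat \<Rightarrow> nat \<Rightarrow> nat \<Rightarrow> bool" where
  "bi_inv s t i b bi \<longleftrightarrow> (0 < b \<longrightarrow> 1 \<le> bi \<and> bi < i \<and> Lval s t bi = b \<and> (\<forall>j. 1 \<le> j \<longrightarrow> j < bi \<longrightarrow> Lval s t j < b))"

lemma bestUpTo_Suc: "1 \<le> i \<Longrightarrow> bestUpTo s t (Suc i) = max (bestUpTo s t i) (Lval s t i)"
proof -
  assume i: "1 \<le> i"
  have e: "Lval s t ` {1..<Suc i} = insert (Lval s t i) (Lval s t ` {1..<i})" using i by (simp add: atLeastLessThanSuc)
  have "Max (insert 0 (insert (Lval s t i) (Lval s t ` {1..<i}))) =
        Max (insert (Lval s t i) (insert 0 (Lval s t ` {1..<i})))" by (simp only: insert_commute)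
  also have "\<dots> = max (Lval s t i) (Max (insert 0 (Lval s t ` {1..<i})))" by (rule Max_insert) auto
  finally show ?thesis unfolding bestUpTo_def e by (simp add: max.commute)
qed
lemma Lval_le_best: "1 \<le> j \<Longrightarrow> j < i \<Longrightarrow> Lval s t j \<le> bestUpTo s t i"
  unfolding bestUpTo_def by (rule Max_ge) auto
lemma best_1: "bestUpTo s t 1 = 0" "bestUpTo s t (Suc 0) = 0" by (simp_all add: bestUpTo_def)
lemma bi_inv_0: "bi_inv s t i 0 bi" by (simp add: bi_inv_def)

lemma for_loop:
  fixes s :: "'a list"
  assumes "d = t - i" "pc c = 11" "regs c 0 = length s" "regs c 1 = t" "regs c 2 = i" "regs c 9 = 1" "regs c 10 = 0"
    "goodR s (regs c)" "1 \<le> i" "i \<le> t" "t \<le> length s" "regs c 4 = bestUpTo s t i" "bi_inv s t i (regs c 4) (regs c 5)"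
  shows "wp s c (\<lambda>c'. pc c' = 12 \<and> regs c' 0 = length s \<and> regs c' 1 = t \<and> regs c' 9 = 1 \<and> regs c' 10 = 0
     \<and> regs c' 4 = bestUpTo s t t \<and> bi_inv s t t (regs c' 4) (regs c' 5) \<and> out c' = out c)"
  using assms
proof (induction d arbitrary: c i rule: less_induct)
  case (less d)
  note A = less.prems
  have A1: "regs c (Suc 0) = t" "Suc 0 \<le> i" using A by auto
  note B = A A1
  show ?case
  proof (cases "i < t")
    case False
    then show ?thesis
      apply -
      apply (rule wp_step, simp add: B, simp add: B)
      apply (simp add: B Prog_nth)
      apply (rule wp_done, use B in simp)
      using B by auto
  next
    case True
    have ilt: "i < t" by fact
    have U1: "bestUpTo s t i < Lval s t i \<Longrightarrow> bestUpTo s t (Suc i) = Lval s t i"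
      using bestUpTo_Suc[of i s t] B by simp
    have U2: "bestUpTo s t i < Lval s t i \<Longrightarrow> bi_inv s t (Suc i) (Lval s t i) i"
    proof -
      assume h: "bestUpTo s t i < Lval s t i"
      have "\<forall>j. 1 \<le> j \<longrightarrow> j < i \<longrightarrow> Lval s t j < Lval s t i"
        using Lval_le_best[of _ i s t] h by (meson order_le_less_trans)
      then show ?thesis using B unfolding bi_inv_def by simp
    qed
    have N1: "\<not> bestUpTo s t i < Lval s t i \<Longrightarrow> bestUpTo s t (Suc i) = bestUpTo s t i"
      using bestUpTo_Suc[of i s t] B by simp
    have N2: "bi_inv s t (Suc i) (bestUpTo s t i) (regs c 5)"
      using B unfolding bi_inv_def by auto
    show ?thesis
      apply (rule wp_step, simp add: B, simp add: B)
      apply (simp add: B Prog_nth ilt)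
      apply (rule wp_step, use B in simp, simp)
      apply (simp add: B Prog_nth)
      apply (rule wp_trans)
       apply (rule while_loop[where l=0 and t=t and i=i])
                 apply (simp_all add: B ilt)
      subgoal premises p for c1
      proof -
        have R: "regs c1 0 = length s" "regs c1 (Suc 0) = t" "regs c1 2 = i" "regs c1 4 = bestUpTo s t i"
          "regs c1 5 = regs c 5" "regs c1 9 = 1" "regs c1 10 = 0" "regs c1 3 = Lval s t i" "pc c1 = 32"
          "out c1 = out c" "goodR s (regs c1)"
          using p B by auto
        have F2: "Lval s t i \<le> length s + 1 - t" by (rule Lval_le2)
        note C = R B ilt F2
        show ?thesis
          apply (rule wp_step, simp add: C, simp add: C)
          apply (cases "bestUpTo s t i < Lval s t i")
          subgoal
            apply (simp add: C Prog_nth)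
            apply (rule wp_step, use C in simp, simp)
            apply (simp add: C Prog_nth)
            apply (rule wp_step, use C in simp, simp)
            apply (simp add: C Prog_nth)
            apply (rule wp_step, use C in simp, simp)
            apply (simp add: C Prog_nth)
            apply (rule wp_step, use C in simp, simp)
            apply (simp add: C Prog_nth)
            apply (rule wp_step, use C in simp, simp)
            apply (simp add: C Prog_nth)
            apply (rule wp_mono, rule less.IH[of "t - Suc i" "Suc i"])
            apply (simp_all add: C U1 U2 N1 N2)
            subgoal using ilt by simp
            subgoal using C ilt F2 unfolding goodR_def by auto
            subgoal using ilt by simp
            by (elim conjE) simp
          subgoal
            apply (simp add: C Prog_nth)
            apply (rule wp_step, use C in simp, simp)
            apply (simp add: C Prog_nth)
            apply (rule wp_step, use C in simp, simp)
            apply (simp add: C Prog_nth)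
            apply (rule wp_mono, rule less.IH[of "t - Suc i" "Suc i"])
            apply (simp_all add: C U1 U2 N1 N2)
            subgoal using ilt by simp
            subgoal using C ilt F2 unfolding goodR_def by auto
            subgoal using ilt by simp
            by (elim conjE) simp
          done
      qed
      done
  qed
qed

lemma lz_end: "length s < t \<Longrightarrow> lz_from s t = []" by (subst lz_from.simps) simp
lemma lz_1: "1 \<le> length s \<Longrightarrow> lz_from s 1 = Lit (s!0) # lz_from s 2" by (subst lz_from.simps) (cases s, auto)
lemma lz_lit: "2 \<le> t \<Longrightarrow> t \<le> length s \<Longrightarrow> maxL s t \<le> 1 \<Longrightarrow>
   lz_from s t = Lit (s!(t-1)) # lz_from s (Suc t)" by (subst lz_from.simps) simp
lemma lz_copy: "2 \<le> t \<Longrightarrow> t \<le> length s \<Longrightarrow> \<not> maxL s t \<le> 1 \<Longrightarrow>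
   lz_from s t = Copy (argL s t) (maxL s t) # lz_from s (t + maxL s t)" by (subst lz_from.simps) simp

lemma best_max: "2 \<le> t \<Longrightarrow> bestUpTo s t t = maxL s t"
proof -
  assume t: "2 \<le> t"
  have ne: "Lval s t ` {1..<t} \<noteq> {}" using t by auto
  have "Max (insert 0 (Lval s t ` {1..<t})) = max 0 (Max (Lval s t ` {1..<t}))"
    by (rule Max_insert) (use ne in auto)
  then show ?thesis unfolding bestUpTo_def maxL_def by simp
qed

lemma maxL_le: "2 \<le> t \<Longrightarrow> maxL s t \<le> length s + 1 - t"
  unfolding maxL_def using Lval_le2 by (intro Max.boundedI) auto

lemma argL_eq: assumes "bi_inv s t t b bi" "b = maxL s t" "0 < b" shows "argL s t = bi"
proof -
  have h: "1 \<le> bi" "bi < t" "Lval s t bi = b" "\<forall>j. 1 \<le> j \<longrightarrow> j < bi \<longrightarrow> Lval s t j < b"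
    using assms unfolding bi_inv_def by auto
  show ?thesis unfolding argL_def
  proof (rule Least_equality)
    show "1 \<le> bi \<and> bi < t \<and> Lval s t bi = maxL s t" using h assms by simp
    fix y assume "1 \<le> y \<and> y < t \<and> Lval s t y = maxL s t"
    then show "bi \<le> y" using h assms by (metis not_le order_less_irrefl)
  qed
qed

lemma outer:
  fixes s :: "'a list"
  assumes "d = length s + 1 - t" "pc c = 2" "regs c 0 = length s" "regs c 1 = t" "regs c 9 = 1" "regs c 10 = 0"
    "goodR s (regs c)" "1 \<le> t" "t \<le> length s + 1"
  shows "wp s c (\<lambda>c'. pc c' = 38 \<and> out c' = out c @ lz_from s t)"
  using assms
proof (induction d arbitrary: c t rule: less_induct)
  case (less d)
  note A = less.prems
  have A1: "regs c (Suc 0) = t" "Suc 0 \<le> t" "regs c 9 = Suc 0" using A by auto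
  note B = A A1
  show ?case
  proof (cases "length s < t")
    case True
    then show ?thesis
      apply -
      apply (rule wp_step, simp add: B, simp add: B)
      apply (simp add: B Prog_nth)
      apply (rule wp_done, use B in simp)
      using B lz_end by auto
  next
    case False
    have tn: "t \<le> length s" using False by simp
    show ?thesis
    proof (cases "t = 1")
      case True
      have n1: "1 \<le> length s" using tn True by simp
      have ne: "s \<noteq> []" using n1 by auto
      show ?thesis
        apply (rule wp_step, simp add: B, simp add: B)
        apply (use B tn True ne in \<open>simp add: Prog_nth\<close>)
        apply (rule wp_step, use B in simp, simp)
        apply (use B tn True ne in \<open>simp add: Prog_nth\<close>)
        apply (rule wp_step, use B in simp, simp)
        apply (use B tn True ne in \<open>simp add: Prog_nth\<close>)
        apply (rule wp_step, use B in simp, simp)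
        apply (use B tn True ne in \<open>simp add: Prog_nth\<close>)
        apply (rule wp_step, use B True n1 in simp, simp)
        apply (use B tn True ne in \<open>simp add: Prog_nth\<close>)
        apply (rule wp_step, use B True n1 in simp, simp)
        apply (use B tn True ne in \<open>simp add: Prog_nth\<close>)
        apply (rule wp_mono, rule less.IH[of "length s + 1 - 2" 2])
        using B True n1 lz_1[of s] by (simp_all add: goodR_def)
    next
      case False
      have t2: "2 \<le> t" using False B by simp
      have F: "maxL s t \<le> length s + 1 - t" using maxL_le[OF t2] .
      show ?thesis
        apply (rule wp_step, simp add: B, simp add: B)
        apply (use B tn t2 in \<open>simp add: Prog_nth\<close>)
        apply (rule wp_step, use B in simp, simp)
        apply (use B tn t2 in \<open>simp add: Prog_nth\<close>)
        apply (rule wp_step, use B in simp, simp)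
        apply (use B tn t2 in \<open>simp add: Prog_nth\<close>)
        apply (rule wp_step, use B in simp, simp)
        apply (use B tn t2 in \<open>simp add: Prog_nth\<close>)
        apply (rule wp_step, use B in simp, simp)
        apply (use B tn t2 in \<open>simp add: Prog_nth\<close>)
        apply (rule wp_trans)
         apply (rule for_loop[where t=t and i=1])
                    apply (use B tn t2 in \<open>simp_all add: best_1 bi_inv_0\<close>)
        subgoal premises p for c1
        proof -
          have R: "regs c1 0 = length s" "regs c1 (Suc 0) = t" "regs c1 9 = Suc 0" "regs c1 10 = 0"
             "regs c1 4 = maxL s t" "bi_inv s t t (maxL s t) (regs c1 5)" "pc c1 = 12" "out c1 = out c"
             "goodR s (regs c1)"
            using p best_max[OF t2, of s] by auto
          note C = R B tn t2 F
          show ?thesis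
          proof (cases "1 < maxL s t")
            case True
            have ag: "argL s t = regs c1 5" using argL_eq[OF R(6)] True by simp
            have lz: "lz_from s t = Copy (regs c1 5) (maxL s t) # lz_from s (t + maxL s t)"
              using lz_copy[OF t2 tn] True ag by simp
            show ?thesis
              apply (rule wp_step, use C in simp, use C in simp)
              apply (use C True in \<open>simp add: Prog_nth\<close>)
              apply (rule wp_step, use C in simp, use C in simp)
              apply (use C True in \<open>simp add: Prog_nth\<close>)
              apply (rule wp_step, use C in simp, use C in simp)
              apply (use C True in \<open>simp add: Prog_nth\<close>)
              apply (rule wp_step, use C F in simp, use C in simp)
              apply (use C True in \<open>simp add: Prog_nth\<close>)
              apply (rule wp_mono, rule less.IH[of "length s + 1 - (t + maxL s t)" "t + maxL s t"])
              using C True lz F by (simp_all add: goodR_def)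
          next
            case False
            have lz: "lz_from s t = Lit (s!(t-1)) # lz_from s (Suc t)"
              using lz_lit[OF t2 tn] False by simp
            show ?thesis
              apply (rule wp_step, use C in simp, use C in simp)
              apply (use C False in \<open>simp add: Prog_nth\<close>)
              apply (rule wp_step, use C in simp, use C in simp)
              apply (use C False in \<open>simp add: Prog_nth\<close>)
              apply (rule wp_step, use C in simp, use C in simp)
              apply (use C False in \<open>simp add: Prog_nth\<close>)
              apply (rule wp_step, use C in simp, use C in simp)
              apply (use C False in \<open>simp add: Prog_nth\<close>)
              apply (rule wp_step, use C in simp, use C in simp)
              apply (use C False in \<open>simp add: Prog_nth\<close>)
              apply (rule wp_mono, rule less.IH[of "length s + 1 - Suc t" "Suc t"])
              using C False lz by (simp_all add: goodR_def)
          qed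
        qed
        done
    qed
  qed
qed


lemma Prog_Suc0: "Prog ! Suc 0 = Inc 9" by (simp add: Prog_def)

lemma bitlen_small: "v < 2 \<Longrightarrow> bitlen v = 1" by (subst bitlen.simps) simp
lemma bitlen_step: "2 \<le> v \<Longrightarrow> bitlen v = Suc (bitlen (v div 2))" by (subst bitlen.simps) simp
lemma bitlen_ge1: "1 \<le> bitlen v" by (subst bitlen.simps) simp

lemma bitlen_mono: "a \<le> b \<Longrightarrow> bitlen a \<le> bitlen b"
proof (induction b arbitrary: a rule: less_induct)
  case (less b)
  show ?case
  proof (cases "a < 2")
    case True
    then show ?thesis using bitlen_ge1[of b] by (simp add: bitlen_small)
  next
    case False
    then have b2: "2 \<le> b" "2 \<le> a" using less.prems by auto
    have "bitlen (a div 2) \<le> bitlen (b div 2)"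
      using less.IH[of "b div 2" "a div 2"] b2 less.prems by (simp add: div_le_mono)
    then show ?thesis using b2 by (simp add: bitlen_step)
  qed
qed

lemma bitlen_Suc: "bitlen (Suc v) \<le> 2 * bitlen v"
proof (cases "v = 0")
  case True then show ?thesis by (simp add: bitlen_small)
next
  case False
  have "bitlen (Suc v) \<le> bitlen (2 * v)" using False by (intro bitlen_mono) simp
  also have "\<dots> = Suc (bitlen v)" using False by (subst bitlen_step) auto
  also have "\<dots> \<le> 2 * bitlen v" using bitlen_ge1[of v] by simp
  finally show ?thesis .
qed

lemma space_bound:
  fixes c :: "('a::finite) config" and s :: "'a list"
  assumes "goodR s (regs c)"
  shows "space Prog c \<le> (28 + 2 * bitlen (card (UNIV :: 'a set))) * bitlen (length s)"
proof -
  let ?b = "bitlen (length s)"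
  let ?B = "bitlen (card (UNIV :: 'a set))"
  have np: "nregs Prog = 11" by (simp add: Prog_def nregs_def)
  have ncp: "ncregs Prog = 2" by (simp add: Prog_def ncregs_def)
  have lp: "bitlen (length Prog) = 6" by (simp add: len_Prog bitlen.simps)
  have b1: "1 \<le> ?b" by (rule bitlen_ge1)
  have each: "\<forall>r\<in>{..<11}. bitlen (regs c r) \<le> 2 * ?b"
  proof
    fix r assume "r \<in> {..<11::nat}"
    then have "regs c r \<le> Suc (length s)" using assms unfolding goodR_def by auto
    then have "bitlen (regs c r) \<le> bitlen (Suc (length s))" by (rule bitlen_mono)
    also have "\<dots> \<le> 2 * ?b" by (rule bitlen_Suc)
    finally show "bitlen (regs c r) \<le> 2 * ?b" .
  qed
  have "(\<Sum>r<11. bitlen (regs c r)) \<le> card {..<11::nat} * (2 * ?b)"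
    using sum_bounded_above[of "{..<11::nat}" "\<lambda>r. bitlen (regs c r)" "2 * ?b"] each by simp
  then have S: "(\<Sum>r<11. bitlen (regs c r)) \<le> 22 * ?b" by simp
  have "space Prog c = 6 + (\<Sum>r<11. bitlen (regs c r)) + 2 * ?B"
    unfolding space_def np ncp lp by simp
  also have "\<dots> \<le> 6 * ?b + 22 * ?b + 2 * ?B * ?b" using S b1
    by (intro add_mono) (auto simp: mult_le_mono)
  also have "\<dots> = (28 + 2 * ?B) * ?b" by (simp add: algebra_simps)
  finally show ?thesis .
qed

theorem lemma2:
  "\<exists>(P :: instr list) (c :: nat). \<forall>s :: ('a::finite) list.
     \<exists>T. halted P (run P s T) \<and> out (run P s T) = lz77 s \<and>
         (\<forall>k \<le> T. space P (run P s k) \<le> c * bitlen (length s))"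
proof (rule exI[of _ Prog], rule exI[of _ "28 + 2 * bitlen (card (UNIV :: 'a set))"], rule allI)
  fix s :: "'a list"
  have g0: "goodR s (regs (init s))" unfolding goodR_def init_def by auto
  have w: "wp s (init s) (\<lambda>c'. pc c' = 38 \<and> out c' = lz77 s)"
    apply (rule wp_step, rule g0, simp add: init_def)
    apply (simp add: init_def Prog_nth)
    apply (rule wp_step, simp add: goodR_def, simp)
    apply (simp add: Prog_nth Prog_Suc0)
    apply (rule wp_mono, rule outer[where d="length s" and s=s and t=1])
    by (simp_all add: goodR_def lz77_def)
  then obtain c' k where k: "(step Prog s ^^ k) (init s) = c'"
    "\<forall>j\<le>k. goodR s (regs ((step Prog s ^^ j) (init s)))" "pc c' = 38" "out c' = lz77 s"
    unfolding wp_def exe_def by blast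
  show "\<exists>T. halted Prog (run Prog s T) \<and> out (run Prog s T) = lz77 s \<and>
         (\<forall>k \<le> T. space Prog (run Prog s k) \<le> (28 + 2 * bitlen (card (UNIV :: 'a set))) * bitlen (length s))"
  proof (intro exI[of _ k] conjI allI impI)
    show "halted Prog (run Prog s k)" using k unfolding run_def halted_def by (simp add: len_Prog)
    show "out (run Prog s k) = lz77 s" using k unfolding run_def by simp
    fix j assume "j \<le> k"
    then show "space Prog (run Prog s j) \<le> (28 + 2 * bitlen (card (UNIV :: 'a set))) * bitlen (length s)"
      using k(2) unfolding run_def by (intro space_bound) auto
  qed
qed

end
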